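(* Let $w_k^A,w_k^B$ be the noise vectors associated with SDQ (see context), under the assumptions that rewards satisfy $|r(s,a,s')|\le1$, $\|Q_0^A\|_\infty,\|Q_0^B\|_\infty\le1$ and $\alpha\in(0,1)$. Then for all $k\ge0$, \[ \mathbb{E}\big[(w_k^A-w_k^B)^T(w_k^A-w_k^B)\big]\le\frac{16}{(1-\gamma)^2}. \]
   Context: Finite MDP with states $\mathcal{S}=\{1,\dots,|\mathcal{S}|\}$, actions $\mathcal{A}=\{1,\dots,|\mathcal{A}|\}$, transitions $P(s'|s,a)$, deterministic reward $r(s,a,s')$ with $|r|\le 1$, discount $\gamma\in(0,1)$. Sampling distribution $d(s,a)>0$ on $\mathcal{S}\times\mathcal{A}$; at iteration $k$, $(s_k,a_k)\sim d$ i.i.d., $s_k'\sim P(\cdot|s_k,a_k)$, $r_{k+1}=r(s_k,a_k,s_k')$. Constant step-size $\alpha\in(0,1)$. SDQ: only entry $(s_k,a_k)$ is updated, $Q_{k+1}^A(s_k,a_k)=Q_k^A(s_k,a_k)+\alpha\{r_{k+1}+\gamma Q_k^A(s_k',\arg\max_aQ_k^B(s_k',a))-Q_k^A(s_k,a_k)\}$ and symmetrically for $B$ with roles of $A,B$ swapped. Vector notation: $Q\in\mathbb{R}^{|\mathcal{S}||\mathcal{A}|}$ stacks $Q(\cdot,1),\dots,Q(\cdot,|\mathcal{A}|)$, so $Q(s,a)=(e_a\otimes e_s)^TQ$. $D$ is the diagonal matrix with entry $d(s,a)$ at position $(s,a)$. $P\in\mathbb{R}^{|\mathcal{S}||\mathcal{A}|\times|\mathcal{S}|}$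 has row $(s,a)$ equal to $P(\cdot|s,a)$. $R(s,a)=\mathbb{E}[r(s,a,s')|s,a]$. For $Q$, $\pi_Q(s)=\arg\max_aQ(s,a)$ (fixed tie-breaking) and $\Pi_Q\in\mathbb{R}^{|\mathcal{S}|\times|\mathcal{S}||\mathcal{A}|}$ has $s$-th row $e_{\pi_Q(s)}^T\otimes e_s^T$. Noise: $w_k^A=(e_{a_k}\otimes e_{s_k})r_{k+1}+\gamma(e_{a_k}\otimes e_{s_k})e_{s_k'}^T\Pi_{Q_k^B}Q_k^A-(e_{a_k}\otimes e_{s_k})(e_{a_k}\otimes e_{s_k})^TQ_k^A-(DR+\gamma DP\Pi_{Q_k^B}Q_k^A-DQ_k^A)$, and $w_k^B$ is the same with $A$ and $B$ swapped. *)

theory Defs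
  imports "HOL-Probability.Probability"
begin

text \<open>A greedy policy selector \<open>greedy Q s\<close> returns an action maximising \<open>Q(s,\<cdot>)\<close>
  (fixed tie-breaking rule, supplied as a parameter).\<close>

type_synonym ('s, 'a) qfun = "'s \<times> 'a \<Rightarrow> real"

definition is_greedy :: "(('s, 'a) qfun \<Rightarrow> 's \<Rightarrow> 'a) \<Rightarrow> bool" where
  "is_greedy greedy \<longleftrightarrow> (\<forall>Q s b. Q (s, b) \<le> Q (s, greedy Q s))"

definition sample_pmf :: "('s \<times> 'a) pmf \<Rightarrow> ('s \<Rightarrow> 'a \<Rightarrow> 's pmf) \<Rightarrow> ('s \<times> 'a \<times> 's) pmf" where
  "sample_pmf d P = bind_pmf d (\<lambda>(s, a). map_pmf (\<lambda>s'. (s, a, s')) (P s a))"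

definition sdq_step ::
  "real \<Rightarrow> real \<Rightarrow> ('s \<Rightarrow> 'a \<Rightarrow> 's \<Rightarrow> real) \<Rightarrow> (('s, 'a) qfun \<Rightarrow> 's \<Rightarrow> 'a)
   \<Rightarrow> ('s, 'a) qfun \<times> ('s, 'a) qfun \<Rightarrow> 's \<times> 'a \<times> 's \<Rightarrow> ('s, 'a) qfun \<times> ('s, 'a) qfun" where
  "sdq_step \<alpha> \<gamma> r greedy QQ \<xi> =
     (case QQ of (QA, QB) \<Rightarrow> case \<xi> of (s, a, s') \<Rightarrow>
       (QA((s, a) := QA (s, a) + \<alpha> * (r s a s' + \<gamma> * QA (s', greedy QB s') - QA (s, a))),
        QB((s, a) := QB (s, a) + \<alpha> * (r s a s' + \<gamma> * QB (s', greedy QA s') - QB (s, a)))))"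

primrec sdq_dist ::
  "('s \<times> 'a) pmf \<Rightarrow> ('s \<Rightarrow> 'a \<Rightarrow> 's pmf) \<Rightarrow> ('s \<Rightarrow> 'a \<Rightarrow> 's \<Rightarrow> real) \<Rightarrow> real \<Rightarrow> real
   \<Rightarrow> (('s, 'a) qfun \<Rightarrow> 's \<Rightarrow> 'a) \<Rightarrow> ('s, 'a) qfun \<Rightarrow> ('s, 'a) qfun \<Rightarrow> nat
   \<Rightarrow> (('s, 'a) qfun \<times> ('s, 'a) qfun) pmf" where
  "sdq_dist d P r \<alpha> \<gamma> greedy QA0 QB0 0 = return_pmf (QA0, QB0)"
| "sdq_dist d P r \<alpha> \<gamma> greedy QA0 QB0 (Suc k) =
     bind_pmf (sdq_dist d P r \<alpha> \<gamma> greedy QA0 QB0 k)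
       (\<lambda>QQ. map_pmf (sdq_step \<alpha> \<gamma> r greedy QQ) (sample_pmf d P))"

definition Rexp :: "('s \<Rightarrow> 'a \<Rightarrow> 's pmf) \<Rightarrow> ('s \<Rightarrow> 'a \<Rightarrow> 's \<Rightarrow> real) \<Rightarrow> 's \<times> 'a \<Rightarrow> real" where
  "Rexp P r x = (case x of (s, a) \<Rightarrow> measure_pmf.expectation (P s a) (r s a))"

text \<open>Noise vector \<open>w^A\<close> for tables \<open>QA\<close> (evaluated) and \<open>QB\<close> (selecting the greedy
  action) and sample \<open>(s,a,s')\<close>, written componentwise:
  \<open>e_{(s,a)} (r + \<gamma> QA(s',\<pi>_{QB}(s')) - QA(s,a)) - (DR + \<gamma> D P \<Pi>_{QB} QA - D QA)\<close>.
  \<open>w^B\<close> is \<open>sdq_noise \<dots> QB QA \<xi>\<close>.\<close>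
definition sdq_noise ::
  "('s \<times> 'a) pmf \<Rightarrow> ('s \<Rightarrow> 'a \<Rightarrow> 's pmf) \<Rightarrow> ('s \<Rightarrow> 'a \<Rightarrow> 's \<Rightarrow> real) \<Rightarrow> real
   \<Rightarrow> (('s, 'a) qfun \<Rightarrow> 's \<Rightarrow> 'a) \<Rightarrow> ('s, 'a) qfun \<Rightarrow> ('s, 'a) qfun \<Rightarrow> 's \<times> 'a \<times> 's
   \<Rightarrow> ('s, 'a) qfun" where
  "sdq_noise d P r \<gamma> greedy QA QB \<xi> = (\<lambda>x.
     (case \<xi> of (s, a, s') \<Rightarrow>
        (if x = (s, a) then r s a s' + \<gamma> * QA (s', greedy QB s') - QA (s, a) else 0))
     - pmf d x * (Rexp P r x
                  + \<gamma> * measure_pmf.expectation (P (fst x) (snd x)) (\<lambda>s'. QA (s', greedy QB s'))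
                  - QA x))"

end

theory Submission
  imports Defs
begin

lemma pmf_sample:
  "pmf (sample_pmf d P) (s, a, s') = pmf d (s, a) * pmf (P s a) s'"
proof -
  have "pmf (sample_pmf d P) (s, a, s') =
     (\<Sum>y\<in>{(s,a)}. pmf (case y of (s0, a0) \<Rightarrow> map_pmf (\<lambda>t. (s0, a0, t)) (P s0 a0)) (s, a, s') * pmf d y)"
    unfolding sample_pmf_def pmf_bind
    by (rule integral_measure_pmf_real) (auto simp: set_map_pmf pmf_eq_0_set_pmf split: prod.splits)
  also have "pmf (map_pmf (\<lambda>t. (s,a,t)) (P s a)) ((\<lambda>t. (s,a,t)) s') = pmf (P s a) s'"
    by (rule pmf_map_inj') (simp add: inj_def)
  then have "(\<Sum>y\<in>{(s,a)}. pmf (case y of (s0, a0) \<Rightarrow> map_pmf (\<lambda>t. (s0, a0, t)) (P s0 a0)) (s, a, s') * pmf d y) = pmf (P s a) s' * pmf d (s, a)"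
    by simp
  finally show ?thesis by simp
qed

lemma sum_triple:
  "(\<Sum>z\<in>(UNIV::('s::finite \<times> 'a::finite \<times> 'b::finite) set). h z) = (\<Sum>y\<in>UNIV. \<Sum>t\<in>UNIV. h (fst y, snd y, t))"
proof -
  have "(\<Sum>z\<in>(UNIV::('s \<times> 'a \<times> 'b) set). h z) = (\<Sum>yt\<in>(UNIV::(('s \<times> 'a) \<times> 'b) set). h (fst (fst yt), snd (fst yt), snd yt))"
    by (rule sum.reindex_bij_witness[of _ "\<lambda>yt. (fst (fst yt), snd (fst yt), snd yt)" "\<lambda>z. ((fst z, fst (snd z)), snd (snd z))"]) auto
  also have "\<dots> = (\<Sum>y\<in>UNIV. \<Sum>t\<in>UNIV. h (fst y, snd y, t))"
  proof -
    have "(\<Sum>y\<in>(UNIV::('s \<times> 'a) set). \<Sum>t\<in>(UNIV::'b set). h (fst y, snd y, t)) = (\<Sum>yt\<in>UNIV \<times> UNIV. h (fst (fst yt), snd (fst yt), snd yt))"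
      by (simp add: sum.cartesian_product case_prod_beta)
    then show ?thesis by simp
  qed
  finally show ?thesis .
qed

lemma exp_sample:
  fixes d :: "('s::finite \<times> 'a::finite) pmf"
  shows "measure_pmf.expectation (sample_pmf d P) g =
    (\<Sum>y\<in>UNIV. pmf d y * (\<Sum>t\<in>UNIV. pmf (P (fst y) (snd y)) t * g (fst y, snd y, t)))"
proof -
  have "measure_pmf.expectation (sample_pmf d P) g = (\<Sum>z\<in>UNIV. g z * pmf (sample_pmf d P) z)"
    by (rule integral_measure_pmf_real) auto
  also have "\<dots> = (\<Sum>y\<in>UNIV. \<Sum>t\<in>UNIV. g (fst y, snd y, t) * pmf (sample_pmf d P) (fst y, snd y, t))"
    by (rule sum_triple)
  also have "\<dots> = (\<Sum>y\<in>UNIV. pmf d y * (\<Sum>t\<in>UNIV. pmf (P (fst y) (snd y)) t * g (fst y, snd y, t)))"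
    by (simp add: pmf_sample sum_distrib_left mult_ac)
  finally show ?thesis .
qed

lemma exp_P:
  fixes p :: "'s::finite pmf"
  shows "measure_pmf.expectation p g = (\<Sum>t\<in>UNIV. pmf p t * g t)"
  by (subst integral_measure_pmf_real[where A=UNIV]) (auto simp: mult_ac)

lemma var_sum:
  fixes q :: "'b::finite pmf" and I :: "'x set" and Z :: "'x \<Rightarrow> 'b \<Rightarrow> real"
  assumes "finite I" and c: "\<And>x. x \<in> I \<Longrightarrow> c x = measure_pmf.expectation q (Z x)"
  shows "measure_pmf.expectation q (\<lambda>\<xi>. \<Sum>x\<in>I. (Z x \<xi> - c x)\<^sup>2)
       \<le> measure_pmf.expectation q (\<lambda>\<xi>. \<Sum>x\<in>I. (Z x \<xi>)\<^sup>2)"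
proof -
  have p1: "(\<Sum>t\<in>UNIV. pmf q t) = 1" by (rule sum_pmf_eq_1) auto
  have cx: "c x = (\<Sum>t\<in>UNIV. pmf q t * Z x t)" if "x \<in> I" for x
    using c[OF that] exp_P by metis
  have "measure_pmf.expectation q (\<lambda>\<xi>. \<Sum>x\<in>I. (Z x \<xi> - c x)\<^sup>2)
     = (\<Sum>x\<in>I. \<Sum>t\<in>UNIV. pmf q t * (Z x t - c x)\<^sup>2)"
    by (simp add: exp_P sum_distrib_left sum.swap[of _ UNIV I])
  also have "\<dots> = (\<Sum>x\<in>I. (\<Sum>t\<in>UNIV. pmf q t * (Z x t)\<^sup>2) - 2 * c x * (\<Sum>t\<in>UNIV. pmf q t * Z x t) + (c x)\<^sup>2 * (\<Sum>t\<in>UNIV. pmf q t))"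
    by (simp add: power2_diff sum_distrib_left sum_distrib_right sum_subtractf sum.distrib algebra_simps)
  also have "\<dots> = (\<Sum>x\<in>I. (\<Sum>t\<in>UNIV. pmf q t * (Z x t)\<^sup>2) - (c x)\<^sup>2)"
    by (rule sum.cong) (auto simp: p1 cx[symmetric] power2_eq_square)
  also have "\<dots> \<le> (\<Sum>x\<in>I. (\<Sum>t\<in>UNIV. pmf q t * (Z x t)\<^sup>2))"
    by (rule sum_mono) simp
  also have "\<dots> = measure_pmf.expectation q (\<lambda>\<xi>. \<Sum>x\<in>I. (Z x \<xi>)\<^sup>2)"
    by (simp add: exp_P sum_distrib_left sum.swap[of _ UNIV I])
  finally show ?thesis .
qed

definition Uf :: "real \<Rightarrow> (('s, 'a) qfun \<Rightarrow> 's \<Rightarrow> 'a) \<Rightarrow> ('s, 'a) qfun \<Rightarrow> ('s, 'a) qfun \<Rightarrow> 's \<times> 'a \<times> 's \<Rightarrow> real" where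
  "Uf \<gamma> greedy QA QB \<xi> = (case \<xi> of (s, a, t) \<Rightarrow>
      \<gamma> * QA (t, greedy QB t) - QA (s, a) - (\<gamma> * QB (t, greedy QA t) - QB (s, a)))"

definition Zf :: "real \<Rightarrow> (('s, 'a) qfun \<Rightarrow> 's \<Rightarrow> 'a) \<Rightarrow> ('s, 'a) qfun \<Rightarrow> ('s, 'a) qfun \<Rightarrow> 's \<times> 'a \<Rightarrow> 's \<times> 'a \<times> 's \<Rightarrow> real" where
  "Zf \<gamma> greedy QA QB x \<xi> = (if x = (fst \<xi>, fst (snd \<xi>)) then Uf \<gamma> greedy QA QB \<xi> else 0)"

lemma exp_Zf:
  fixes d :: "('s::finite \<times> 'a::finite) pmf" and P :: "'s \<Rightarrow> 'a \<Rightarrow> 's pmf"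
  shows "measure_pmf.expectation (sample_pmf d P) (Zf \<gamma> greedy QA QB x) =
    pmf d x * (\<Sum>t\<in>UNIV. pmf (P (fst x) (snd x)) t * Uf \<gamma> greedy QA QB (fst x, snd x, t))"
proof -
  have "measure_pmf.expectation (sample_pmf d P) (Zf \<gamma> greedy QA QB x) =
    (\<Sum>y\<in>UNIV. (if y = x then pmf d x * (\<Sum>t\<in>UNIV. pmf (P (fst x) (snd x)) t * Uf \<gamma> greedy QA QB (fst x, snd x, t)) else 0))"
    unfolding exp_sample by (rule sum.cong) (auto simp: Zf_def)
  then show ?thesis by simp
qed

lemma noise_diff:
  fixes d :: "('s::finite \<times> 'a::finite) pmf" and P :: "'s \<Rightarrow> 'a \<Rightarrow> 's pmf"
  shows "sdq_noise d P r \<gamma> greedy QA QB \<xi> x - sdq_noise d P r \<gamma> greedy QB QA \<xi> x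
    = Zf \<gamma> greedy QA QB x \<xi> - measure_pmf.expectation (sample_pmf d P) (Zf \<gamma> greedy QA QB x)"
proof -
  obtain s a t where xi: "\<xi> = (s, a, t)" by (cases \<xi>) auto
  obtain x1 x2 where x: "x = (x1, x2)" by (cases x) auto
  define SA where "SA = (\<Sum>t\<in>UNIV. pmf (P x1 x2) t * QA (t, greedy QB t))"
  define SB where "SB = (\<Sum>t\<in>UNIV. pmf (P x1 x2) t * QB (t, greedy QA t))"
  have p1: "(\<Sum>t\<in>UNIV. pmf (P x1 x2) t) = 1" by (rule sum_pmf_eq_1) auto
  have "(\<Sum>t\<in>UNIV. pmf (P x1 x2) t * Uf \<gamma> greedy QA QB (x1, x2, t))
     = \<gamma> * SA - QA (x1, x2) * (\<Sum>t\<in>UNIV. pmf (P x1 x2) t)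
       - (\<gamma> * SB - QB (x1, x2) * (\<Sum>t\<in>UNIV. pmf (P x1 x2) t))"
    unfolding SA_def SB_def
    by (simp add: Uf_def sum_distrib_left sum_distrib_right sum_subtractf sum.distrib algebra_simps)
  then have E: "measure_pmf.expectation (sample_pmf d P) (Zf \<gamma> greedy QA QB x)
      = pmf d x * (\<gamma> * SA - QA x - (\<gamma> * SB - QB x))"
    unfolding exp_Zf by (simp add: x p1)
  have EA: "measure_pmf.expectation (P (fst x) (snd x)) (\<lambda>s'. QA (s', greedy QB s')) = SA"
    unfolding SA_def x by (simp add: exp_P)
  have EB: "measure_pmf.expectation (P (fst x) (snd x)) (\<lambda>s'. QB (s', greedy QA s')) = SB"
    unfolding SB_def x by (simp add: exp_P)
  show ?thesis
    unfolding E sdq_noise_def EA EB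
    by (cases "x = (s, a)") (simp_all add: xi Zf_def Uf_def algebra_simps)
qed

lemma Uf_bound:
  assumes bA: "\<And>x. \<bar>QA x\<bar> \<le> M" and bB: "\<And>x. \<bar>QB x\<bar> \<le> M" and g: "0 \<le> \<gamma>" "\<gamma> \<le> 1"
  shows "(Uf \<gamma> greedy QA QB \<xi>)\<^sup>2 \<le> 16 * M\<^sup>2"
proof -
  obtain s a t where xi: "\<xi> = (s, a, t)" by (cases \<xi>) auto
  have M0: "0 \<le> M" using bA[of "(s,a)"] by linarith
  have h1: "\<bar>\<gamma> * QA (t, greedy QB t)\<bar> \<le> M"
    using bA[of "(t, greedy QB t)"] g by (simp add: abs_mult) (metis mult_le_one mult_mono abs_ge_zero mult_left_le_one_le order_trans M0)
  have h2: "\<bar>\<gamma> * QB (t, greedy QA t)\<bar> \<le> M"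
    using bB[of "(t, greedy QA t)"] g by (simp add: abs_mult) (metis mult_le_one mult_mono abs_ge_zero mult_left_le_one_le order_trans M0)
  have "\<bar>Uf \<gamma> greedy QA QB \<xi>\<bar> \<le> 4 * M"
    using h1 h2 bA[of "(s,a)"] bB[of "(s,a)"] by (simp add: xi Uf_def abs_le_iff)
  then have "\<bar>Uf \<gamma> greedy QA QB \<xi>\<bar>\<^sup>2 \<le> (4 * M)\<^sup>2"
    by (rule power_mono) simp
  then show ?thesis by (simp add: power_mult_distrib)
qed

lemma inner_bound:
  fixes d :: "('s::finite \<times> 'a::finite) pmf" and P :: "'s \<Rightarrow> 'a \<Rightarrow> 's pmf"
  assumes bA: "\<And>x. \<bar>QA x\<bar> \<le> M" and bB: "\<And>x. \<bar>QB x\<bar> \<le> M" and g: "0 \<le> \<gamma>" "\<gamma> \<le> 1"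
  shows "measure_pmf.expectation (sample_pmf d P)
     (\<lambda>\<xi>. \<Sum>x\<in>UNIV. (sdq_noise d P r \<gamma> greedy QA QB \<xi> x - sdq_noise d P r \<gamma> greedy QB QA \<xi> x)\<^sup>2)
     \<le> 16 * M\<^sup>2"
proof -
  let ?q = "sample_pmf d P"
  let ?Z = "Zf \<gamma> greedy QA QB"
  have "measure_pmf.expectation ?q
     (\<lambda>\<xi>. \<Sum>x\<in>UNIV. (sdq_noise d P r \<gamma> greedy QA QB \<xi> x - sdq_noise d P r \<gamma> greedy QB QA \<xi> x)\<^sup>2)
     = measure_pmf.expectation ?q (\<lambda>\<xi>. \<Sum>x\<in>UNIV. (?Z x \<xi> - measure_pmf.expectation ?q (?Z x))\<^sup>2)"
    by (simp only: noise_diff)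
  also have "\<dots> \<le> measure_pmf.expectation ?q (\<lambda>\<xi>. \<Sum>x\<in>UNIV. (?Z x \<xi>)\<^sup>2)"
    by (rule var_sum) auto
  also have "\<dots> = measure_pmf.expectation ?q (\<lambda>\<xi>. (Uf \<gamma> greedy QA QB \<xi>)\<^sup>2)"
  proof -
    have "(\<Sum>x\<in>UNIV. (?Z x \<xi>)\<^sup>2) = (Uf \<gamma> greedy QA QB \<xi>)\<^sup>2" for \<xi>
    proof -
      have "(\<Sum>x\<in>UNIV. (?Z x \<xi>)\<^sup>2) = (\<Sum>x\<in>UNIV. if x = (fst \<xi>, fst (snd \<xi>)) then (Uf \<gamma> greedy QA QB \<xi>)\<^sup>2 else 0)"
        by (rule sum.cong) (auto simp: Zf_def)
      then show ?thesis by simp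
    qed
    then show ?thesis by simp
  qed
  also have "\<dots> \<le> (\<Sum>t\<in>UNIV. pmf ?q t * (16 * M\<^sup>2))"
    unfolding exp_P by (rule sum_mono) (simp add: mult_left_mono Uf_bound[OF bA bB g])
  also have "\<dots> = 16 * M\<^sup>2"
    by (simp add: sum_distrib_right[symmetric] sum_pmf_eq_1)
  finally show ?thesis .
qed

lemma upd_bound:
  fixes q v \<alpha> M :: real
  assumes "\<bar>q\<bar> \<le> M" "\<bar>v\<bar> \<le> M" "0 \<le> \<alpha>" "\<alpha> \<le> 1"
  shows "\<bar>q + \<alpha> * (v - q)\<bar> \<le> M"
proof -
  have "q + \<alpha> * (v - q) = (1 - \<alpha>) * q + \<alpha> * v" by (simp add: algebra_simps)
  also have "\<bar>\<dots>\<bar> \<le> (1 - \<alpha>) * \<bar>q\<bar> + \<alpha> * \<bar>v\<bar>"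
    using assms by (metis abs_mult abs_of_nonneg abs_triangle_ineq diff_ge_0_iff_ge)
  also have "\<dots> \<le> (1 - \<alpha>) * M + \<alpha> * M"
    using assms by (intro add_mono mult_left_mono) auto
  finally show ?thesis by (simp add: algebra_simps)
qed

lemma step_bound:
  assumes bA: "\<And>x. \<bar>fst QQ x\<bar> \<le> M" and bB: "\<And>x. \<bar>snd QQ x\<bar> \<le> M"
    and r: "\<And>s a s'. \<bar>r s a s'\<bar> \<le> 1" and al: "0 \<le> \<alpha>" "\<alpha> \<le> 1" and g: "0 \<le> \<gamma>"
    and M: "1 + \<gamma> * M \<le> M"
  shows "(\<forall>x. \<bar>fst (sdq_step \<alpha> \<gamma> r greedy QQ \<xi>) x\<bar> \<le> M) \<and> (\<forall>x. \<bar>snd (sdq_step \<alpha> \<gamma> r greedy QQ \<xi>) x\<bar> \<le> M)"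
proof -
  obtain QA QB where QQ: "QQ = (QA, QB)" by (cases QQ) auto
  obtain s a t where xi: "\<xi> = (s, a, t)" by (cases \<xi>) auto
  have vb: "\<bar>r s a t + \<gamma> * Q y\<bar> \<le> M" if "\<And>x. \<bar>Q x\<bar> \<le> M" for Q y
  proof -
    have "\<bar>\<gamma> * Q y\<bar> \<le> \<gamma> * M" using that[of y] g by (simp add: abs_mult mult_left_mono)
    then show ?thesis using r[of s a t] M by linarith
  qed
  have A: "\<And>x. \<bar>QA x\<bar> \<le> M" and B: "\<And>x. \<bar>QB x\<bar> \<le> M" using bA bB QQ by auto
  show ?thesis
    unfolding QQ xi sdq_step_def
    using upd_bound[OF A vb[OF A] al] upd_bound[OF B vb[OF B] al] A B
    by (auto simp: algebra_simps)
qed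

lemma dist_bound:
  fixes d :: "('s::finite \<times> 'a::finite) pmf"
  assumes b0A: "\<And>x. \<bar>QA0 x\<bar> \<le> M" and b0B: "\<And>x. \<bar>QB0 x\<bar> \<le> M"
    and r: "\<And>s a s'. \<bar>r s a s'\<bar> \<le> 1" and al: "0 \<le> \<alpha>" "\<alpha> \<le> 1" and g: "0 \<le> \<gamma>"
    and M: "1 + \<gamma> * M \<le> M"
  shows "QQ \<in> set_pmf (sdq_dist d P r \<alpha> \<gamma> greedy QA0 QB0 k) \<Longrightarrow>
     (\<forall>x. \<bar>fst QQ x\<bar> \<le> M) \<and> (\<forall>x. \<bar>snd QQ x\<bar> \<le> M)"
proof (induction k arbitrary: QQ)
  case 0
  then show ?case using b0A b0B by simp
next
  case (Suc k)
  then obtain QQ0 \<xi> where "QQ0 \<in> set_pmf (sdq_dist d P r \<alpha> \<gamma> greedy QA0 QB0 k)"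
     and QQ: "QQ = sdq_step \<alpha> \<gamma> r greedy QQ0 \<xi>" by auto
  then have "(\<forall>x. \<bar>fst QQ0 x\<bar> \<le> M) \<and> (\<forall>x. \<bar>snd QQ0 x\<bar> \<le> M)" using Suc.IH by blast
  then show ?case unfolding QQ using step_bound[where QQ=QQ0 and M=M and r=r and \<alpha>=\<alpha> and \<gamma>=\<gamma> and greedy=greedy and \<xi>=\<xi>] r al g M by blast
qed

lemma dist_finite:
  fixes d :: "('s::finite \<times> 'a::finite) pmf" and P :: "'s \<Rightarrow> 'a \<Rightarrow> 's pmf"
  shows "finite (set_pmf (sdq_dist d P r \<alpha> \<gamma> greedy QA0 QB0 k))"
  by (induction k) (auto simp: set_bind_pmf)

theorem lemma6:
  fixes d :: "('s::finite \<times> 'a::finite) pmf"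
    and P :: "'s \<Rightarrow> 'a \<Rightarrow> 's pmf"
    and r :: "'s \<Rightarrow> 'a \<Rightarrow> 's \<Rightarrow> real"
    and \<alpha> \<gamma> :: real
    and greedy :: "('s, 'a) qfun \<Rightarrow> 's \<Rightarrow> 'a"
    and QA0 QB0 :: "('s, 'a) qfun"
    and k :: nat
  assumes d_pos: "\<And>x. pmf d x > 0"
    and r_bound: "\<And>s a s'. \<bar>r s a s'\<bar> \<le> 1"
    and gamma: "0 < \<gamma>" "\<gamma> < 1"
    and alpha: "0 < \<alpha>" "\<alpha> < 1"
    and greedy: "is_greedy greedy"
    and QA0_bound: "\<And>x. \<bar>QA0 x\<bar> \<le> 1"
    and QB0_bound: "\<And>x. \<bar>QB0 x\<bar> \<le> 1"
  shows "measure_pmf.expectation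
           (pair_pmf (sdq_dist d P r \<alpha> \<gamma> greedy QA0 QB0 k) (sample_pmf d P))
           (\<lambda>(QQ, \<xi>). \<Sum>x\<in>UNIV.
              (sdq_noise d P r \<gamma> greedy (fst QQ) (snd QQ) \<xi> x
               - sdq_noise d P r \<gamma> greedy (snd QQ) (fst QQ) \<xi> x)\<^sup>2)
         \<le> 16 / (1 - \<gamma>)\<^sup>2"
proof -
  define M where "M = 1 / (1 - \<gamma>)"
  have M1: "1 \<le> M" using gamma by (simp add: M_def)
  have MM: "1 + \<gamma> * M \<le> M" using gamma by (simp add: M_def field_simps)
  have M16: "16 * M\<^sup>2 = 16 / (1 - \<gamma>)\<^sup>2" by (simp add: M_def power_divide)
  let ?p = "sdq_dist d P r \<alpha> \<gamma> greedy QA0 QB0 k"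
  let ?q = "sample_pmf d P"
  let ?S = "set_pmf ?p"
  define f where "f = (\<lambda>(QQ::('s, 'a) qfun \<times> ('s, 'a) qfun, \<xi>). \<Sum>x\<in>UNIV.
              (sdq_noise d P r \<gamma> greedy (fst QQ) (snd QQ) \<xi> x
               - sdq_noise d P r \<gamma> greedy (snd QQ) (fst QQ) \<xi> x)\<^sup>2)"
  have fin: "finite ?S" by (rule dist_finite)
  have bnd: "(\<forall>x. \<bar>fst QQ x\<bar> \<le> M) \<and> (\<forall>x. \<bar>snd QQ x\<bar> \<le> M)" if "QQ \<in> ?S" for QQ
  proof (rule dist_bound[where M=M and r=r and \<alpha>=\<alpha> and \<gamma>=\<gamma> and ?QA0.0=QA0 and ?QB0.0=QB0 and d=d and P=P and greedy=greedy and k=k])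
    show "\<bar>QA0 x\<bar> \<le> M" for x using QA0_bound[of x] M1 by linarith
    show "\<bar>QB0 x\<bar> \<le> M" for x using QB0_bound[of x] M1 by linarith
  qed (use r_bound alpha gamma MM that in auto)
  have "measure_pmf.expectation (pair_pmf ?p ?q) f = (\<Sum>z\<in>?S \<times> UNIV. f z * pmf (pair_pmf ?p ?q) z)"
    by (rule integral_measure_pmf_real) (use fin in auto)
  also have "\<dots> = (\<Sum>(QQ, \<xi>)\<in>?S \<times> UNIV. pmf ?p QQ * (pmf ?q \<xi> * f (QQ, \<xi>)))"
    by (intro sum.cong refl) (clarsimp simp: pmf_pair)
  also have "\<dots> = (\<Sum>QQ\<in>?S. \<Sum>\<xi>\<in>UNIV. pmf ?p QQ * (pmf ?q \<xi> * f (QQ, \<xi>)))"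
    by (simp only: sum.cartesian_product)
  also have "\<dots> = (\<Sum>QQ\<in>?S. pmf ?p QQ * (\<Sum>\<xi>\<in>UNIV. pmf ?q \<xi> * f (QQ, \<xi>)))"
    by (simp add: sum_distrib_left)
  also have "\<dots> \<le> (\<Sum>QQ\<in>?S. pmf ?p QQ * (16 * M\<^sup>2))"
  proof (rule sum_mono, rule mult_left_mono)
    fix QQ assume "QQ \<in> ?S"
    then have bA: "\<And>x. \<bar>fst QQ x\<bar> \<le> M" and bB: "\<And>x. \<bar>snd QQ x\<bar> \<le> M" using bnd by blast+
    have "(\<Sum>\<xi>\<in>UNIV. pmf ?q \<xi> * f (QQ, \<xi>)) = measure_pmf.expectation ?q (\<lambda>\<xi>. f (QQ, \<xi>))"
      by (simp add: exp_P)
    also have "\<dots> \<le> 16 * M\<^sup>2"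
      unfolding f_def using inner_bound[where QA="fst QQ" and QB="snd QQ" and M=M and \<gamma>=\<gamma> and d=d and P=P and r=r and greedy=greedy, OF bA bB] gamma by simp
    finally show "(\<Sum>\<xi>\<in>UNIV. pmf ?q \<xi> * f (QQ, \<xi>)) \<le> 16 * M\<^sup>2" .
  qed simp
  also have "\<dots> = 16 * M\<^sup>2"
    by (simp add: sum_distrib_right[symmetric] sum_pmf_eq_1 fin)
  finally show ?thesis unfolding f_def M16 .
qed

end
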